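(* Assume Case (III) holds with $\mathrm{rank}(\mathbf H)=m$, and let $\mathbf y^\star=(\mathbf H^T\mathbf H)^{-1}\mathbf H^T\mathbf z$ be the unique least squares solution, i.e. the unique minimizer of $\|\mathbf z-\mathbf H\mathbf y\|^2$. Suppose $\mathrm G_{\sigma(t)}\equiv\mathrm G^S=(\mathrm V,\mathrm E^S)$ for a fixed bidirectional connected graph $\mathrm G^S$, and $a_{ij}(t)=a_{ji}(t)\equiv a_{ij}^S>0$ are constants. Then for every $\epsilon>0$ there exists $K_\ast(\epsilon)>0$ such that whenever $K\ge K_\ast(\epsilon)$, for every initial value $\mathbf x(0)$ the limit $\mathbf x(\infty)=\lim_{t\to\infty}\mathbf x(t)$ along the "consensus + projection" flow exists and $\|\mathbf x_i(\infty)-\mathbf y^\star\|\le\epsilon$ for all $i\in\mathrm V$.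
   Context: Setting: $N,m\ge 1$; $\mathbf H\in\mathbb R^{N\times m}$ has rows $\mathbf h_1^{T},\dots,\mathbf h_N^{T}$ with $\|\mathbf h_i\|=1$ for all $i$; $\mathbf z=(z_1,\dots,z_N)^T\in\mathbb R^N$. Let $\mathcal A_i=\{\mathbf y\in\mathbb R^m:\mathbf h_i^T\mathbf y=z_i\}$ and $\mathcal P_{\mathcal A_i}(\mathbf y)=(I-\mathbf h_i\mathbf h_i^T)\mathbf y+z_i\mathbf h_i$ the Euclidean projection onto $\mathcal A_i$. Case (III): $\mathbf z$ is not in the column space of $\mathbf H$. Network: $\mathrm V=\{1,\dots,N\}$; for a graph with arc set $\mathrm E$, $\mathrm N_i=\{j:(j,i)\in\mathrm E\}$; a graph is bidirectional if $(i,j)\in\mathrm E\iff(j,i)\in\mathrm E$, and connected if moreover strongly connected. The "consensus + projection" flow with gain $K>0$ on this fixed graph is $\dot{\mathbf x}_i=K\sum_{j\in\mathrm N_i}a_{ij}^S(\mathbf x_j-\mathbf x_i)+\mathcal P_{\mathcal A_i}(\mathbf x_i)-\mathbf x_i$, $i\in\mathrm V$, with $\mathbf x_i(t)\in\mathbb R^m$, $\mathbf x=(\mathbf x_1,\dots,\mathbf x_N)$. *)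

theory Defs
  imports "HOL-Analysis.Analysis"
begin

text \<open>Agents are indexed by a finite type 'n (so N = CARD('n)), the state space
  is real^'m (so m = CARD('m)). H :: real^'m^'n has rows h_i = H $ i.\<close>

definition proj_A :: "real^'m^'n \<Rightarrow> real^'n \<Rightarrow> 'n \<Rightarrow> real^'m \<Rightarrow> real^'m" where
  "proj_A H z i y = (y - (inner (H $ i) y) *\<^sub>R (H $ i)) + (z $ i) *\<^sub>R (H $ i)"

definition least_squares_sol :: "real^'m^'n \<Rightarrow> real^'n \<Rightarrow> real^'m" where
  "least_squares_sol H z = matrix_inv (transpose H ** H) *v (transpose H *v z)"

definition bidirectional :: "('n \<times> 'n) set \<Rightarrow> bool" where
  "bidirectional E \<longleftrightarrow> (\<forall>i j. (i, j) \<in> E \<longleftrightarrow> (j, i) \<in> E)"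

definition connected_graph :: "('n \<times> 'n) set \<Rightarrow> bool" where
  "connected_graph E \<longleftrightarrow> bidirectional E \<and> (\<forall>i j. (i, j) \<in> E\<^sup>*)"

definition neighbors :: "('n \<times> 'n) set \<Rightarrow> 'n \<Rightarrow> 'n set" where
  "neighbors E i = {j. (j, i) \<in> E}"

definition cons_proj_flow ::
  "real^'m^'n \<Rightarrow> real^'n \<Rightarrow> ('n \<times> 'n) set \<Rightarrow> ('n \<Rightarrow> 'n \<Rightarrow> real) \<Rightarrow> real
   \<Rightarrow> (real \<Rightarrow> (real^'m)^'n) \<Rightarrow> bool" where
  "cons_proj_flow H z E a K x \<longleftrightarrow>
     (\<forall>t\<ge>0. (x has_vector_derivative
        (\<chi> i. K *\<^sub>R (\<Sum>j\<in>neighbors E i. a i j *\<^sub>R (x t $ j - x t $ i))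
               + (proj_A H z i (x t $ i) - x t $ i))) (at t within {0..}))"

end

theory Submission imports Defs begin


lemma HtH_inj:
  fixes H :: "real^'m^'n"
  assumes "rank H = CARD('m)"
  shows "invertible (transpose H ** H)"
proof -
  have injH: "inj ((*v) H)" using assms full_rank_injective by blast
  have "\<forall>y. (transpose H ** H) *v y = 0 \<longrightarrow> y = 0"
  proof (intro allI impI)
    fix y assume "(transpose H ** H) *v y = 0"
    then have "inner y ((transpose H ** H) *v y) = 0" by simp
    then have "inner (H *v y) (H *v y) = 0"
      by (metis dot_lmul_matrix matrix_vector_mul_assoc vector_transpose_matrix transpose_transpose inner_commute)
    then have "H *v y = 0" by simp
    then show "y = 0" using injH by (metis injD matrix_vector_mult_0_right)
  qed
  then show ?thesis
    by (simp add: invertible_left_inverse matrix_left_invertible_ker)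
qed

lemma ls_normal:
  fixes H :: "real^'m^'n"
  assumes "rank H = CARD('m)"
  shows "(transpose H ** H) *v least_squares_sol H z = transpose H *v z"
proof -
  have "(transpose H ** H) ** matrix_inv (transpose H ** H) = mat 1"
    using HtH_inj[OF assms] unfolding invertible_def matrix_inv_def by (rule someI2_ex) auto
  then show ?thesis unfolding least_squares_sol_def
    by (metis matrix_vector_mul_assoc matrix_vector_mul_lid)
qed



definition Lap :: "('n \<times> 'n) set \<Rightarrow> ('n \<Rightarrow> 'n \<Rightarrow> real) \<Rightarrow> (real^'m)^'n \<Rightarrow> (real^'m)^'n" where
  "Lap E a x = (\<chi> i. \<Sum>j\<in>neighbors E i. a i j *\<^sub>R (x$j - x$i))"
definition Dm :: "real^'m^'n \<Rightarrow> (real^'m)^'n \<Rightarrow> (real^'m)^'n" where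
  "Dm H x = (\<chi> i. inner (H$i) (x$i) *\<^sub>R H$i)"
definition Sq :: "('n \<times> 'n) set \<Rightarrow> ('n \<Rightarrow> 'n \<Rightarrow> real) \<Rightarrow> (real^'m)^'n \<Rightarrow> real" where
  "Sq E a x = (\<Sum>p\<in>E. a (snd p) (fst p) * (norm (x$fst p - x$snd p))^2)"
definition Rq :: "real^'m^'n \<Rightarrow> (real^'m)^'n \<Rightarrow> real" where
  "Rq H x = (\<Sum>i\<in>UNIV. (inner (H$i) (x$i))^2)"

lemma finE: "finite (E :: ('n::finite \<times> 'n) set)"
  by (rule finite_subset[OF subset_UNIV]) simp

lemma sum_nb:
  fixes E :: "('n::finite \<times> 'n) set"
  shows "(\<Sum>i\<in>UNIV. \<Sum>j\<in>neighbors E i. f j i) = (\<Sum>p\<in>E. f (fst p) (snd p))"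
proof -
  have "(\<Sum>p\<in>E. f (fst p) (snd p)) = (\<Sum>i\<in>UNIV. \<Sum>p\<in>{p. p \<in> E \<and> snd p = i}. f (fst p) (snd p))"
    by (rule sum.group[symmetric]) (auto simp: finE)
  also have "\<dots> = (\<Sum>i\<in>UNIV. \<Sum>j\<in>neighbors E i. f j i)"
  proof (rule sum.cong[OF refl])
    fix i
    show "(\<Sum>p\<in>{p. p \<in> E \<and> snd p = i}. f (fst p) (snd p)) = (\<Sum>j\<in>neighbors E i. f j i)"
      by (rule sum.reindex_bij_witness[of _ "\<lambda>j. (j,i)" fst]) (auto simp: neighbors_def)
  qed
  finally show ?thesis by simp
qed

lemma inner_Lap:
  assumes bd: "bidirectional E" and sym: "\<And>i j. a i j = a j i"
  shows "inner x (Lap E a x) = - Sq E a x / 2"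
proof -
  define T where "T = (\<Sum>p\<in>E. a (snd p) (fst p) * inner (x$snd p) (x$fst p - x$snd p))"
  have "inner x (Lap E a x) = (\<Sum>i\<in>UNIV. \<Sum>j\<in>neighbors E i. a i j * inner (x$i) (x$j - x$i))"
    unfolding inner_vec_def[of x "Lap E a x"] by (simp add: Lap_def inner_sum_right)
  also have "\<dots> = T" unfolding T_def by (rule sum_nb)
  finally have 1: "inner x (Lap E a x) = T" .
  have 2: "T = (\<Sum>p\<in>E. a (snd p) (fst p) * inner (x$fst p) (x$snd p - x$fst p))"
    unfolding T_def
    by (rule sum.reindex_bij_witness[of _ prod.swap prod.swap])
       (use bd in \<open>auto simp: bidirectional_def sym\<close>)
  have "2 * T = (\<Sum>p\<in>E. a (snd p) (fst p) * (inner (x$snd p) (x$fst p - x$snd p) + inner (x$fst p) (x$snd p - x$fst p)))"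
    by (subst mult_2, subst (2) 2) (simp add: T_def sum.distrib[symmetric] distrib_left)
  also have "\<dots> = - Sq E a x"
    unfolding Sq_def sum_negf[symmetric]
    by (rule sum.cong[OF refl]) (simp add: power2_norm_eq_inner inner_diff algebra_simps inner_commute)
  finally show ?thesis using 1 by simp
qed

lemma inner_Dm: "inner x (Dm H x) = Rq H x"
  unfolding inner_vec_def[of x "Dm H x"] by (simp add: Dm_def Rq_def power2_eq_square inner_commute)

lemma linear_Lap: "linear (Lap E a)"
  by (rule linearI; rule vec_eq_iff[THEN iffD2])
    (simp_all add: Lap_def sum.distrib[symmetric] scaleR_add_right scaleR_diff_right scaleR_sum_right,
     auto intro!: sum.cong simp: algebra_simps)

lemma linear_Dm: "linear (Dm H)"
  by (rule linearI; rule vec_eq_iff[THEN iffD2]) (simp_all add: Dm_def inner_add_right algebra_simps)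

lemma Sq_nonneg:
  assumes pos: "\<And>i j. (j, i) \<in> E \<Longrightarrow> a i j > 0"
  shows "Sq E a x \<ge> 0"
  unfolding Sq_def by (rule sum_nonneg) (auto intro!: mult_nonneg_nonneg less_imp_le[OF pos])

lemma Rq_nonneg: "Rq H x \<ge> 0"
  unfolding Rq_def by (rule sum_nonneg) simp

lemma Sq_zero:
  assumes conn: "connected_graph E" and pos: "\<And>i j. (j, i) \<in> E \<Longrightarrow> a i j > 0"
    and S0: "Sq E a x = 0"
  shows "x$i = x$j"
proof -
  have "\<forall>p\<in>E. a (snd p) (fst p) * (norm (x$fst p - x$snd p))^2 = 0"
    using S0 unfolding Sq_def
    by (subst sum_nonneg_eq_0_iff[symmetric]) (auto simp: finE intro!: mult_nonneg_nonneg less_imp_le[OF pos])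
  then have edge: "x$k = x$l" if "(k,l) \<in> E" for k l
    using that pos[OF that] by fastforce
  have "(i,j) \<in> E\<^sup>*" using conn by (simp add: connected_graph_def)
  then show ?thesis
    by (induction rule: rtrancl_induct) (auto dest: edge)
qed

lemma posdef:
  fixes f :: "'a::euclidean_space \<Rightarrow> real"
  assumes cont: "continuous_on UNIV f" and hom: "\<And>c x. f (c *\<^sub>R x) = c^2 * f x"
    and pos: "\<And>x. x \<noteq> 0 \<Longrightarrow> f x > 0"
  shows "\<exists>d>0. \<forall>x. d * (norm x)^2 \<le> f x"
proof -
  obtain b :: 'a where b: "b \<in> Basis" using nonempty_Basis by blast
  have ne: "sphere 0 1 \<noteq> ({} :: 'a set)" using b by (auto simp: sphere_def intro!: exI[of _ b])
  obtain u where u: "u \<in> sphere (0::'a) 1" "\<And>y. y \<in> sphere 0 1 \<Longrightarrow> f u \<le> f y"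
    using continuous_attains_inf[OF compact_sphere ne continuous_on_subset[OF cont subset_UNIV]] by blast
  have "u \<noteq> 0" using u by auto
  then have fu: "f u > 0" using pos by blast
  show ?thesis
  proof (intro exI[of _ "f u"] conjI allI fu)
    fix x :: 'a
    show "f u * (norm x)^2 \<le> f x"
    proof (cases "x = 0")
      case True then show ?thesis using hom[of 0 x] by simp
    next
      case False
      have "f u \<le> f ((1 / norm x) *\<^sub>R x)" using u(2) False by simp
      also have "\<dots> = f x / (norm x)^2" by (simp add: hom power_divide)
      finally show ?thesis using False by (simp add: field_simps)
    qed
  qed
qed



lemma Lap_cst: "Lap E a (\<chi> i. w) = 0"
  by (rule vec_eq_iff[THEN iffD2]) (simp add: Lap_def)

lemma Sq_shift: "Sq E a (x - (\<chi> i. w)) = Sq E a x"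
  by (simp add: Sq_def)

lemma flow_rhs:
  "(\<chi> i. K *\<^sub>R (\<Sum>j\<in>neighbors E i. a i j *\<^sub>R (x $ j - x $ i)) + (proj_A H z i (x $ i) - x $ i))
    = K *\<^sub>R Lap E a x - Dm H x + (\<chi> i. z$i *\<^sub>R H$i)"
  by (rule vec_eq_iff[THEN iffD2]) (simp add: Lap_def Dm_def proj_A_def)

lemma HT_sum: "transpose H *v w = (\<Sum>i\<in>UNIV. w$i *\<^sub>R H$i)"
  by (rule vec_eq_iff[THEN iffD2]) (simp add: matrix_vector_mult_def transpose_def sum_component mult.commute)

lemma Rq_cst_zero:
  assumes "Rq H (\<chi> i. w) = 0" shows "H *v w = 0"
proof -
  have "\<forall>i\<in>UNIV. (inner (H$i) w)^2 = 0"
    using assms unfolding Rq_def by (subst sum_nonneg_eq_0_iff[symmetric]) auto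
  then show ?thesis by (simp add: vec_eq_iff matrix_vector_mul_component)
qed

lemma cont_Sq: "continuous_on UNIV (Sq E a)"
  unfolding Sq_def by (intro continuous_intros)

lemma cont_Rq: "continuous_on UNIV (Rq H)"
  unfolding Rq_def by (intro continuous_intros)

lemma hom_Sq: "Sq E a (c *\<^sub>R x) = c^2 * Sq E a x"
  unfolding Sq_def sum_distrib_left
  by (rule sum.cong[OF refl]) (simp add: scaleR_diff_right[symmetric] power_mult_distrib)

lemma hom_Rq: "Rq H (c *\<^sub>R x) = c^2 * Rq H x"
  unfolding Rq_def sum_distrib_left
  by (rule sum.cong[OF refl]) (simp add: power_mult_distrib)



lemma conv:
  fixes F :: "'a::real_inner \<Rightarrow> 'a"
  assumes lin: "linear F"
    and flow: "\<And>t. t \<ge> 0 \<Longrightarrow> (x has_vector_derivative (F (x t) + b)) (at t within {0..})"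
    and eq: "F xs + b = 0"
    and d: "d > 0" and kd: "\<And>u. d * (norm u)^2 \<le> - inner u (F u)"
  shows "(x \<longlongrightarrow> xs) at_top"
proof -
  define u where "u t = x t - xs" for t
  define V where "V t = inner (u t) (u t)" for t
  define W where "W t = exp (2*d*t) * V t" for t
  define W' where "W' t = 2*d*exp (2*d*t) * V t + exp (2*d*t) * (2 * inner (u t) (F (u t)))" for t
  have du: "(u has_derivative (\<lambda>h. h *\<^sub>R F (u t))) (at t within {0..})" if "t \<ge> 0" for t
  proof -
    have "b = - F xs" using add.inverse_unique[OF eq] by simp
    then have "F (x t) + b = F (u t)" using linear_diff[OF lin, of "x t" xs] unfolding u_def
      by simp
    then show ?thesis using has_vector_derivative_diff[OF flow[OF that] has_vector_derivative_const[of xs]]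
      unfolding u_def[abs_def] has_vector_derivative_def by simp
  qed
  have dV: "(V has_real_derivative 2 * inner (u t) (F (u t))) (at t within {0..})" if "t \<ge> 0" for t
    using has_derivative_inner[OF du[OF that] du[OF that]] unfolding has_field_derivative_def V_def[abs_def]
    by (rule has_derivative_eq_rhs) (auto simp: fun_eq_iff inner_commute algebra_simps)
  have dW: "(W has_real_derivative W' t) (at t within {0..})" if "t \<ge> 0" for t
    unfolding W_def[abs_def] W'_def
    by (rule derivative_eq_intros dV[OF that] refl | simp)+
  have W'le: "W' t \<le> 0" for t
  proof -
    have "2*d*V t + 2 * inner (u t) (F (u t)) \<le> 0" using kd[of "u t"] by (simp add: V_def power2_norm_eq_inner)
    then have "exp (2*d*t) * (2*d*V t + 2 * inner (u t) (F (u t))) \<le> 0"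
      by (meson exp_ge_zero mult_nonneg_nonpos)
    then show ?thesis by (simp add: W'_def algebra_simps)
  qed
  have Wle: "W t \<le> W 0" if t0: "t \<ge> 0" for t
  proof -
    have dW2: "(W has_derivative (\<lambda>h. h * W' s)) (at s within {0..t})" if "0 \<le> s" "s \<le> t" for s
    proof -
      have "(W has_derivative (*) (W' s)) (at s within {0..t})"
        using has_derivative_subset[OF dW[OF that(1), unfolded has_field_derivative_def], of "{0..t}"] by auto
      moreover have "(*) (W' s) = (\<lambda>h. h * W' s)" by (auto simp: fun_eq_iff)
      ultimately show ?thesis by simp
    qed
    obtain s where "s \<in> {0..t}" "W t - W 0 = W' s * (t - 0)"
      using mvt_very_simple[OF t0, of W "\<lambda>s h. h * W' s", OF dW2] by auto
      then show ?thesis using W'le[of s] t0 mult_nonpos_nonneg[of "W' s" t] by simp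
  qed
  have bnd: "norm (u t) \<le> sqrt (V 0) * exp (- d * t)" if "t \<ge> 0" for t
  proof -
    have "exp (2*d*t) * (norm (u t))^2 \<le> V 0" using Wle[OF that] by (simp add: W_def V_def power2_norm_eq_inner)
    then have "(norm (u t))^2 \<le> V 0 * exp (- (2*d*t))"
      by (simp add: exp_minus field_simps)
    also have "\<dots> = (sqrt (V 0) * exp (- d * t))^2"
      by (simp add: power_mult_distrib V_def exp_double[symmetric] mult_exp_exp[symmetric])
    finally show ?thesis by (rule power2_le_imp_le) (simp add: V_def)
  qed
  have g: "((\<lambda>t. sqrt (V 0) * exp (- d * t)) \<longlongrightarrow> 0) at_top"
  proof -
    have "LIM t at_top. (- d) * t :> at_bot"
      by (rule filterlim_tendsto_neg_mult_at_bot[OF tendsto_const]) (use d in \<open>auto simp: filterlim_ident\<close>)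
    then have "((\<lambda>t. exp (- d * t)) \<longlongrightarrow> 0) at_top"
      by (rule filterlim_compose[OF exp_at_bot])
    then show ?thesis by (rule tendsto_mult_right_zero)
  qed
  have "(u \<longlongrightarrow> 0) at_top"
    by (rule Lim_null_comparison[OF _ g]) (rule eventually_at_top_linorderI[of 0], rule bnd)
  then show ?thesis unfolding u_def by (simp add: LIM_zero_iff)
qed



lemma eq_bound:
  fixes E :: "('n::finite \<times> 'n) set" and e c :: "(real^'m)^'n"
  assumes bd: "bidirectional E" and sym: "\<And>i j. a i j = a j i"
    and pos: "\<And>i j. (j, i) \<in> E \<Longrightarrow> a i j > 0"
    and K: "K \<ge> 1"
    and d1: "\<And>u::(real^'m)^'n. d1 * (norm u)^2 \<le> Sq E a u / 2 + Rq H u"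
    and d2: "\<And>u::(real^'m)^'n. d2 * (norm u)^2 \<le> Sq E a u / 2 + (norm (\<Sum>i\<in>UNIV. u$i))^2"
    and d1p: "d1 > 0" and d2p: "d2 > 0"
    and eq: "K *\<^sub>R Lap E a e - Dm H e = c"
    and csum: "(\<Sum>i\<in>UNIV. c$i) = 0"
  shows "d1 * d2 * K * (norm e)^2 \<le> (norm c)^2"
proof -
  define S where "S = Sq E a e / 2"
  define R where "R = Rq H e"
  have S0: "S \<ge> 0" using Sq_nonneg[OF pos] by (simp add: S_def)
  have R0: "R \<ge> 0" using Rq_nonneg by (simp add: R_def)
  have q: "inner e c = - (K * S + R)"
    unfolding eq[symmetric] using inner_Lap[OF bd sym, of e] inner_Dm[of e H]
    by (simp add: inner_diff_right S_def R_def)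
  define m :: "real^'m" where "m = (1 / real CARD('n)) *\<^sub>R (\<Sum>i\<in>UNIV. e$i)"
  define et where "et = e - (\<chi> i. m)"
  have "inner (\<chi> i. m) c = inner m (\<Sum>i\<in>UNIV. c$i)"
    unfolding inner_vec_def[of "\<chi> i. m" c] by (simp add: inner_sum_right)
  then have "inner (\<chi> i. m) c = 0" using csum by simp
  then have q2: "inner et c = - (K * S + R)" using q by (simp add: et_def inner_diff_left)
  have "(\<Sum>i\<in>UNIV. et$i) = (\<Sum>i\<in>UNIV. e$i) - real CARD('n) *\<^sub>R m"
    by (simp add: et_def sum_subtractf scaleR_conv_of_real)
  also have "\<dots> = 0" by (simp add: m_def)
  finally have "d2 * (norm et)^2 \<le> S" using d2[of et] by (simp add: S_def et_def Sq_shift)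
  define A where "A = norm et"
  define C where "C = norm c"
  have A0: "A \<ge> 0" "C \<ge> 0" by (simp_all add: A_def C_def)
  have hA: "d2 * A^2 \<le> S" using \<open>d2 * (norm et)^2 \<le> S\<close> by (simp add: A_def)
  have hKS: "K * S + R \<le> A * C"
    using q2 norm_cauchy_schwarz[of et "-c"] by (simp add: A_def C_def)
  have he: "d1 * (norm e)^2 \<le> S + R" using d1[of e] by (simp add: S_def R_def)
  have KS: "K * S \<ge> S" using K S0 by (simp add: mult_le_cancel_right1)
  have "K * d2 * A \<le> C"
  proof (cases "A = 0")
    case True then show ?thesis using A0 by simp
  next
    case False
    then have Ap: "A > 0" using A0 by simp
    have "K * d2 * A^2 \<le> K * S" using hA K by (simp add: mult.assoc)
    also have "\<dots> \<le> A * C" using hKS R0 by linarith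
    finally have "(K * d2 * A) * A \<le> C * A" by (simp add: power2_eq_square algebra_simps)
    then show ?thesis using Ap by simp
  qed
  then have "K * d2 * A * C \<le> C * C" using A0 by (simp add: mult_right_mono)
  moreover have "d1 * (norm e)^2 \<le> A * C" using he hKS KS by linarith
  then have "K * d2 * (d1 * (norm e)^2) \<le> K * d2 * (A * C)"
    using K d2p by (intro mult_left_mono) auto
  ultimately show ?thesis by (simp add: C_def power2_eq_square algebra_simps)
qed



theorem theorem6:
  fixes H :: "real^'m^'n" and z :: "real^'n"
    and E :: "('n \<times> 'n) set" and a :: "'n \<Rightarrow> 'n \<Rightarrow> real"
  assumes unit_rows: "\<And>i. norm (H $ i) = 1"
    and caseIII: "z \<notin> range (\<lambda>y. H *v y)"
    and full_rank: "rank H = CARD('m)"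
    and conn: "connected_graph E"
    and sym: "\<And>i j. a i j = a j i"
    and pos: "\<And>i j. (j, i) \<in> E \<Longrightarrow> a i j > 0"
  shows "\<forall>\<epsilon>>0. \<exists>Kstar>0. \<forall>K\<ge>Kstar. \<forall>x. cons_proj_flow H z E a K x \<longrightarrow>
           (\<exists>xinf. (x \<longlongrightarrow> xinf) at_top \<and>
              (\<forall>i. norm (xinf $ i - least_squares_sol H z) \<le> \<epsilon>))"
proof (intro allI impI)
  fix \<epsilon> :: real assume ep: "\<epsilon> > 0"
  have bd: "bidirectional E" using conn by (simp add: connected_graph_def)
  have Sn: "Sq E a u \<ge> 0" for u :: "(real^'m)^'n" by (rule Sq_nonneg) (rule pos)
  have injH: "inj ((*v) H)" using full_rank full_rank_injective by blast
  have cst: "u = (\<chi> i. u $ i0)" if "Sq E a u = 0" for u :: "(real^'m)^'n" and i0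
    using Sq_zero[OF conn pos that] by (simp add: vec_eq_iff)
  obtain d1 where d1p: "d1 > 0" and d1: "\<And>u::(real^'m)^'n. d1 * (norm u)^2 \<le> Sq E a u / 2 + Rq H u"
  proof -
    have "\<exists>d>0. \<forall>u::(real^'m)^'n. d * (norm u)^2 \<le> Sq E a u / 2 + Rq H u"
    proof (rule posdef)
      show "continuous_on UNIV (\<lambda>u::(real^'m)^'n. Sq E a u / 2 + Rq H u)"
        by (intro continuous_intros cont_Sq cont_Rq) auto
      show "Sq E a (c *\<^sub>R u) / 2 + Rq H (c *\<^sub>R u) = c^2 * (Sq E a u / 2 + Rq H u)" for c u
        by (simp add: hom_Sq hom_Rq algebra_simps)
      show "Sq E a u / 2 + Rq H u > 0" if "u \<noteq> 0" for u :: "(real^'m)^'n"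
      proof (rule ccontr)
        assume "\<not> ?thesis"
        then have "Sq E a u = 0" "Rq H u = 0" using Sn[of u] Rq_nonneg[of H u] by linarith+
        then have u: "u = (\<chi> i. u $ undefined)" and "Rq H (\<chi> i. u $ undefined) = 0" using cst by metis+
        then have "H *v (u $ undefined) = 0" using Rq_cst_zero by blast
        then have "u $ undefined = 0" using injH by (metis injD matrix_vector_mult_0_right)
        then have "u = 0" using u by (metis vec_eq_iff vec_lambda_beta zero_index)
        then show False using that by simp
      qed
    qed
    then show ?thesis using that by blast
  qed
  obtain d2 where d2p: "d2 > 0" and d2: "\<And>u::(real^'m)^'n. d2 * (norm u)^2 \<le> Sq E a u / 2 + (norm (\<Sum>i\<in>UNIV. u$i))^2"
  proof -
    have "\<exists>d>0. \<forall>u::(real^'m)^'n. d * (norm u)^2 \<le> Sq E a u / 2 + (norm (\<Sum>i\<in>UNIV. u$i))^2"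
    proof (rule posdef)
      show "continuous_on UNIV (\<lambda>u::(real^'m)^'n. Sq E a u / 2 + (norm (\<Sum>i\<in>UNIV. u$i))^2)"
        by (intro continuous_intros cont_Sq) auto
      show "Sq E a (c *\<^sub>R u) / 2 + (norm (\<Sum>i\<in>UNIV. (c *\<^sub>R u)$i))^2 = c^2 * (Sq E a u / 2 + (norm (\<Sum>i\<in>UNIV. u$i))^2)" for c u
      proof -
        have "(\<Sum>i\<in>UNIV. (c *\<^sub>R u)$i) = c *\<^sub>R (\<Sum>i\<in>UNIV. u$i)"
          by (simp add: scaleR_sum_right)
        then have "(norm (\<Sum>i\<in>UNIV. (c *\<^sub>R u)$i))^2 = c^2 * (norm (\<Sum>i\<in>UNIV. u$i))^2"
          by (simp add: power_mult_distrib)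
        then show ?thesis by (simp add: hom_Sq distrib_left)
      qed
      show "Sq E a u / 2 + (norm (\<Sum>i\<in>UNIV. u$i))^2 > 0" if "u \<noteq> 0" for u :: "(real^'m)^'n"
      proof (rule ccontr)
        assume "\<not> ?thesis"
        then have "Sq E a u = 0" "(norm (\<Sum>i\<in>UNIV. u$i))^2 = 0" using Sn[of u]
          using zero_le_power2[of "norm (\<Sum>i\<in>UNIV. u$i)"] by linarith+
        then have u: "u = (\<chi> i. u $ undefined)" and s: "(\<Sum>i\<in>UNIV. u$i) = 0" using cst by auto
        have "(\<Sum>i\<in>UNIV. u$i) = real CARD('n) *\<^sub>R u $ undefined"
          by (subst u) (simp add: scaleR_conv_of_real)
        then have "u $ undefined = 0" using s by simp
        then have "u = 0" using u by (metis vec_eq_iff vec_lambda_beta zero_index)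
        then show False using that by simp
      qed
    qed
    then show ?thesis using that by blast
  qed
  define ys where "ys = least_squares_sol H z"
  define c :: "(real^'m)^'n" where "c = (\<chi> i. (inner (H$i) ys - z$i) *\<^sub>R H$i)"
  define bv :: "(real^'m)^'n" where "bv = (\<chi> i. z$i *\<^sub>R H$i)"
  have csum: "(\<Sum>i\<in>UNIV. c$i) = 0"
  proof -
    have "(\<Sum>i\<in>UNIV. c$i) = transpose H *v (H *v ys - z)"
      unfolding HT_sum c_def by (simp add: matrix_vector_mul_component)
    also have "\<dots> = (transpose H ** H) *v ys - transpose H *v z"
      by (simp add: matrix_vector_mult_diff_distrib matrix_vector_mul_assoc)
    also have "\<dots> = 0" using ls_normal[OF full_rank] by (simp add: ys_def)
    finally show ?thesis .
  qed
  define Kstar where "Kstar = max 1 ((norm c)^2 / (d1 * d2 * \<epsilon>^2))"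
  show "\<exists>Kstar>0. \<forall>K\<ge>Kstar. \<forall>x. cons_proj_flow H z E a K x \<longrightarrow>
           (\<exists>xinf. (x \<longlongrightarrow> xinf) at_top \<and>
              (\<forall>i. norm (xinf $ i - least_squares_sol H z) \<le> \<epsilon>))"
  proof (intro exI[of _ Kstar] conjI allI impI)
    show "Kstar > 0" by (simp add: Kstar_def)
    fix K x assume K: "K \<ge> Kstar" and fl: "cons_proj_flow H z E a K x"
    have K1: "K \<ge> 1" using K by (simp add: Kstar_def)
    define F where "F u = K *\<^sub>R Lap E a u - Dm H u" for u
    have linF: "linear F"
      by (rule linearI) (simp_all add: F_def linear_add[OF linear_Lap] linear_add[OF linear_Dm]
          linear_scale[OF linear_Lap] linear_scale[OF linear_Dm] algebra_simps)
    have quad: "inner u (F u) = - (K * (Sq E a u / 2) + Rq H u)" for u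
      using inner_Lap[OF bd sym, of u] inner_Dm[of u H] by (simp add: F_def inner_diff_right)
    have kd: "d1 * (norm u)^2 \<le> - inner u (F u)" for u
    proof -
      have "Sq E a u / 2 \<le> K * (Sq E a u / 2)" using K1 Sn[of u]
        by (simp add: mult_le_cancel_right1)
      then show ?thesis using d1[of u] quad[of u] by linarith
    qed
    have "inj F"
    proof (rule linear_injective_0[OF linF, THEN iffD2], intro allI impI)
      fix u assume "F u = 0"
      then have "d1 * (norm u)^2 \<le> 0" using kd[of u] by simp
      then show "u = 0" using d1p by (simp add: mult_le_0_iff)
    qed
    then have "surj F" using linear_injective_imp_surjective[OF linF] by blast
    then obtain xs where xs: "F xs = - bv" by (metis surjD)
    have flow: "(x has_vector_derivative (F (x t) + bv)) (at t within {0..})" if "t \<ge> 0" for t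
      using fl that unfolding cons_proj_flow_def flow_rhs by (simp add: F_def bv_def)
    have lim: "(x \<longlongrightarrow> xs) at_top"
      by (rule conv[OF linF flow _ d1p kd]) (simp_all add: xs)
    define e where "e = xs - (\<chi> i. ys)"
    have Fc: "F (\<chi> i. ys) = - Dm H (\<chi> i. ys)" by (simp add: F_def Lap_cst)
    have "F e = c"
      unfolding e_def linear_diff[OF linF] xs Fc
      by (rule vec_eq_iff[THEN iffD2]) (simp add: c_def bv_def Dm_def algebra_simps)
    then have eb: "d1 * d2 * K * (norm e)^2 \<le> (norm c)^2"
      using eq_bound[OF bd sym pos K1 d1 d2 d1p d2p _ csum] by (simp add: F_def)
    have "(norm c)^2 \<le> d1 * d2 * \<epsilon>^2 * K"
    proof -
      have "(norm c)^2 / (d1 * d2 * \<epsilon>^2) \<le> K" using K by (simp add: Kstar_def)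
      then show ?thesis using d1p d2p ep by (simp add: divide_le_eq algebra_simps)
    qed
    with eb have "(d1 * d2 * K) * (norm e)^2 \<le> (d1 * d2 * K) * \<epsilon>^2" by (simp add: algebra_simps)
    then have "(norm e)^2 \<le> \<epsilon>^2" using d1p d2p K1 by (simp add: mult_le_cancel_left_pos)
    then have ne: "norm e \<le> \<epsilon>" by (rule power2_le_imp_le) (use ep in simp)
    show "\<exists>xinf. (x \<longlongrightarrow> xinf) at_top \<and> (\<forall>i. norm (xinf $ i - least_squares_sol H z) \<le> \<epsilon>)"
    proof (intro exI[of _ xs] conjI allI lim)
      fix i
      have "norm (xs $ i - least_squares_sol H z) = norm (e $ i)" by (simp add: e_def ys_def)
      also have "\<dots> \<le> norm e" by (rule Finite_Cartesian_Product.norm_nth_le)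
      finally show "norm (xs $ i - least_squares_sol H z) \<le> \<epsilon>" using ne by simp
    qed
  qed
qed


end
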